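(* Let $n\ge 1$, $A\in\mathbb{R}^{n\times n}$ and $C\in\mathbb{R}^{1\times n}$. Assume that $(A,C)$ is an observable pair and that all eigenvalues of $A$ are nonzero. Let $t_1\in\{0,1,2,\ldots\}$ and let $\bar t$ be a positive integer that is not a pathological sampling period of $A$. Then the $n\times n$ matrix with rows $CA^{t_1},CA^{t_1+\bar t},CA^{t_1+2\bar t},\ldots,CA^{t_1+(n-1)\bar t}$ has rank $n$.
   Context: Setting: discrete-time single-output system $x(t+1)=Ax(t)+Bu(t)$, $y(t)=Cx(t)+Du(t)$ with output measured at selected time instances; for time instances $t_1,\ldots,t_l$, the sample-based observability matrix is the matrix with rows $CA^{t_1},\ldots,CA^{t_l}$, and sample-based observability means this matrix has rank $n$. $(A,C)$ is observable if the matrix with rows $C,CA,\ldots,CA^{n-1}$ has rank $n$. A positive integer $h$ is called a pathological sampling period of $A$ if there exist two distinct eigenvalues $\lambda_p\neq\lambda_q$ of $A$, belonging to different Jordan blocks of the Jordan form of $A$, such that $\lambda_p^h=\lambda_q^h$ (equivalently, $|\lambda_p|=|\lambda_q|$ and $\pi/(\phi_q-\phi_p)=h/(2(k_q-k_p))$ for some distinct $k_p,k_q\in\{0,\ldots,h-1\}$, where $\phi_i$ is the phase of $\lambda_i$). *)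

theory Defs
  imports "Jordan_Normal_Form.DL_Rank" "Jordan_Normal_Form.Char_Poly"
begin

definition sample_obs_matrix :: "real mat \<Rightarrow> real mat \<Rightarrow> nat list \<Rightarrow> real mat" where
  "sample_obs_matrix A C ts = mat_of_rows (dim_col A) (map (\<lambda>t. row (C * A ^\<^sub>m t) 0) ts)"

definition observable :: "real mat \<Rightarrow> real mat \<Rightarrow> bool" where
  "observable A C \<longleftrightarrow>
     vec_space.rank (dim_col A) (sample_obs_matrix A C [0..<dim_col A]) = dim_col A"

definition ceigenvalue :: "real mat \<Rightarrow> complex \<Rightarrow> bool" where
  "ceigenvalue A z \<longleftrightarrow> eigenvalue (map_mat complex_of_real A) z"

(* h is a pathological sampling period of A: two distinct eigenvalues (hence in
   different Jordan blocks) with equal h-th powers *)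
definition pathological_period :: "real mat \<Rightarrow> nat \<Rightarrow> bool" where
  "pathological_period A h \<longleftrightarrow> 0 < h \<and>
     (\<exists>lp lq. ceigenvalue A lp \<and> ceigenvalue A lq \<and> lp \<noteq> lq \<and> lp ^ h = lq ^ h)"

end

theory Submission
  imports Defs "Jordan_Normal_Form.Schur_Decomposition"
begin

lemma mat_vec_zero[simp]: "A \<in> carrier_mat nr nc \<Longrightarrow> A *\<^sub>v 0\<^sub>v nc = 0\<^sub>v nr"
  by (intro eq_vecI) (auto simp: row_def)

lemma tri_col:
  fixes T :: "'a::comm_ring_1 mat"
  assumes T: "T \<in> carrier_mat n n" "upper_triangular T"
    and w: "w \<in> carrier_vec n" and z: "\<forall>k. m < k \<longrightarrow> k < n \<longrightarrow> w$k = 0"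
    and i: "m \<le> i" "i < n"
  shows "(T *\<^sub>v w) $ i = T $$ (i,i) * w $ i"
proof -
  have "(T *\<^sub>v w) $ i = (\<Sum>k\<in>{0..<n}. T $$ (i,k) * w $ k)"
    using T w i by (simp add: scalar_prod_def row_def)
  also have "\<dots> = T $$ (i,i) * w $ i"
  proof (rule sum.remove[of _ i, THEN trans])
    show "finite {0..<n}" by simp
    show "i \<in> {0..<n}" using i by simp
    have "(\<Sum>k\<in>{0..<n} - {i}. T $$ (i, k) * w $ k) = 0"
    proof (rule sum.neutral, intro ballI)
      fix k assume k: "k \<in> {0..<n} - {i}"
      show "T $$ (i, k) * w $ k = 0"
      proof (cases "k < i")
        case True then have "T $$ (i,k) = 0" using T i upper_triangularD[OF T(2) True] by auto
        then show ?thesis by simp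
      next
        case False then show ?thesis using k z i by auto
      qed
    qed
    then show "T $$ (i, i) * w $ i + (\<Sum>k\<in>{0..<n} - {i}. T $$ (i, k) * w $ k) = T $$ (i, i) * w $ i" by simp
  qed
  finally show ?thesis .
qed

lemma tri_eig:
  fixes T :: "'a::field mat"
  assumes T: "T \<in> carrier_mat n n" "upper_triangular T"
    and step: "\<And>j w \<mu>. G j w \<Longrightarrow> w \<in> carrier_vec n \<Longrightarrow> G (Suc j) (T *\<^sub>v w - \<mu> \<cdot>\<^sub>v w)"
  shows "G j w \<Longrightarrow> w \<in> carrier_vec n \<Longrightarrow> w \<noteq> 0\<^sub>v n \<Longrightarrow> (\<forall>i. m \<le> i \<longrightarrow> i < n \<longrightarrow> w$i = 0)
    \<Longrightarrow> \<exists>j' w' \<mu>. j' < j + m \<and> G j' w' \<and> w' \<in> carrier_vec n \<and> w' \<noteq> 0\<^sub>v n \<and> T *\<^sub>v w' = \<mu> \<cdot>\<^sub>v w'"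
proof (induction m arbitrary: j w)
  case 0
  then have "w = 0\<^sub>v n" by (intro eq_vecI) auto
  with 0 show ?case by simp
next
  case (Suc m)
  show ?case
  proof (cases "n \<le> m \<or> w $ m = 0")
    case True
    have "\<forall>i. m \<le> i \<longrightarrow> i < n \<longrightarrow> w$i = 0"
    proof (intro allI impI)
      fix i assume i: "m \<le> i" "i < n"
      show "w $ i = 0"
      proof (cases "i = m")
        case True then show ?thesis using i \<open>n \<le> m \<or> w $ m = 0\<close> by auto
      next
        case False then have "Suc m \<le> i" using i(1) by simp
        then show ?thesis using Suc.prems(4) i(2) by blast
      qed
    qed
    from Suc.IH[OF Suc.prems(1-3) this] obtain j' w' \<mu>' where
      "j' < j + m \<and> G j' w' \<and> w' \<in> carrier_vec n \<and> w' \<noteq> 0\<^sub>v n \<and> T *\<^sub>v w' = \<mu>' \<cdot>\<^sub>v w'"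
      by blast
    then show ?thesis by (intro exI[of _ j'] exI[of _ w'] exI[of _ \<mu>']) auto
  next
    case False
    define \<mu> where "\<mu> = T $$ (m,m)"
    define w' where "w' = T *\<^sub>v w - \<mu> \<cdot>\<^sub>v w"
    have w'c: "w' \<in> carrier_vec n" using T Suc.prems unfolding w'_def by auto
    have G': "G (Suc j) w'" unfolding w'_def by (rule step[OF Suc.prems(1,2)])
    show ?thesis
    proof (cases "w' = 0\<^sub>v n")
      case True
      have "T *\<^sub>v w = \<mu> \<cdot>\<^sub>v w"
      proof (rule eq_vecI)
        fix i assume i: "i < dim_vec (\<mu> \<cdot>\<^sub>v w)"
        then have "w' $ i = 0" using True Suc.prems(2) by simp
        then show "(T *\<^sub>v w) $ i = (\<mu> \<cdot>\<^sub>v w) $ i"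
          unfolding w'_def using i T Suc.prems(2) by simp
      qed (use T Suc.prems(2) in simp)
      then show ?thesis using Suc.prems by (intro exI[of _ j] exI[of _ w] exI[of _ \<mu>]) auto
    next
      case nz: False
      have z: "\<forall>i. m \<le> i \<longrightarrow> i < n \<longrightarrow> w'$i = 0"
      proof (intro allI impI)
        fix i assume i: "m \<le> i" "i < n"
        have "(T *\<^sub>v w) $ i = T $$ (i,i) * w $ i"
          by (rule tri_col[OF T Suc.prems(2) _ i]) (use Suc.prems(4) in auto)
        moreover have "i = m \<or> w $ i = 0"
        proof (cases "i = m")
          case False then have "Suc m \<le> i" using i(1) by simp
          then show ?thesis using Suc.prems(4) i(2) by blast
        qed simp
        moreover have "w' $ i = (T *\<^sub>v w) $ i - \<mu> * w $ i"
          unfolding w'_def using i T Suc.prems(2) by simp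
        ultimately show "w' $ i = 0" unfolding \<mu>_def by auto
      qed
      from Suc.IH[OF G' w'c nz z] show ?thesis by auto
    qed
  qed
qed

lemma inv_eig:
  fixes M :: "complex mat"
  assumes M: "M \<in> carrier_mat n n"
    and step: "\<And>j w \<mu>. G j w \<Longrightarrow> w \<in> carrier_vec n \<Longrightarrow> G (Suc j) (M *\<^sub>v w - \<mu> \<cdot>\<^sub>v w)"
    and G0: "G 0 x" and x: "x \<in> carrier_vec n" "x \<noteq> 0\<^sub>v n"
  shows "\<exists>j x' \<mu>. j < n \<and> G j x' \<and> x' \<in> carrier_vec n \<and> x' \<noteq> 0\<^sub>v n \<and> M *\<^sub>v x' = \<mu> \<cdot>\<^sub>v x'"
proof -
  obtain es where es: "char_poly M = (\<Prod>a\<leftarrow>es. [:- a, 1:])"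
    using char_poly_factorized[OF M] by blast
  obtain T P Q where sd: "schur_decomposition M es = (T,P,Q)" by (cases "schur_decomposition M es") auto
  from schur_decomposition[OF M es sd] have sim: "similar_mat_wit M T P Q" and ut: "upper_triangular T"
    by auto
  from similar_mat_witD2[OF M sim] have T: "T \<in> carrier_mat n n" and P: "P \<in> carrier_mat n n"
    and Q: "Q \<in> carrier_mat n n" and PQ: "P * Q = 1\<^sub>m n" and QP: "Q * P = 1\<^sub>m n"
    and MPTQ: "M = P * T * Q" by auto
  have MP: "M *\<^sub>v (P *\<^sub>v w) = P *\<^sub>v (T *\<^sub>v w)" if w: "w \<in> carrier_vec n" for w
  proof -
    have "M *\<^sub>v (P *\<^sub>v w) = (P * T) *\<^sub>v (Q *\<^sub>v (P *\<^sub>v w))"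
      unfolding MPTQ using P T Q w by (simp add: assoc_mult_mat_vec[of _ n n _ n])
    also have "Q *\<^sub>v (P *\<^sub>v w) = w"
      using P Q w QP by (metis assoc_mult_mat_vec one_mult_mat_vec)
    finally show ?thesis using P T w by simp
  qed
  define G' where "G' j w \<longleftrightarrow> w \<in> carrier_vec n \<and> G j (P *\<^sub>v w)" for j w
  have step': "G' (Suc j) (T *\<^sub>v w - \<mu> \<cdot>\<^sub>v w)" if "G' j w" "w \<in> carrier_vec n" for j w \<mu>
  proof -
    have "P *\<^sub>v (T *\<^sub>v w - \<mu> \<cdot>\<^sub>v w) = M *\<^sub>v (P *\<^sub>v w) - \<mu> \<cdot>\<^sub>v (P *\<^sub>v w)"
      using that P T by (simp add: MP mult_minus_distrib_mat_vec[of _ n n] mult_mat_vec[of _ n n])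
    then show ?thesis using step[of j "P *\<^sub>v w" \<mu>] that P T unfolding G'_def by auto
  qed
  have PQx: "P *\<^sub>v (Q *\<^sub>v x) = x"
    using P Q x PQ by (metis assoc_mult_mat_vec one_mult_mat_vec)
  have "G' 0 (Q *\<^sub>v x)" unfolding G'_def PQx using G0 Q x by auto
  moreover have "Q *\<^sub>v x \<noteq> 0\<^sub>v n" using PQx x P by (metis mat_vec_zero)
  ultimately obtain j w \<mu> where jw: "j < 0 + n" "G' j w" "w \<in> carrier_vec n" "w \<noteq> 0\<^sub>v n" "T *\<^sub>v w = \<mu> \<cdot>\<^sub>v w"
    using tri_eig[OF T ut, of G', OF step' _ _ _ _, of 0 "Q *\<^sub>v x" n] Q x by force
  have QPw: "Q *\<^sub>v (P *\<^sub>v w) = w"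
    using P Q jw QP by (metis assoc_mult_mat_vec one_mult_mat_vec)
  show ?thesis
  proof (intro exI conjI)
    show "j < n" using jw by simp
    show "G j (P *\<^sub>v w)" using jw unfolding G'_def by auto
    show "P *\<^sub>v w \<in> carrier_vec n" using P jw by auto
    show "P *\<^sub>v w \<noteq> 0\<^sub>v n" using QPw jw Q by (metis mat_vec_zero)
    show "M *\<^sub>v (P *\<^sub>v w) = \<mu> \<cdot>\<^sub>v (P *\<^sub>v w)" using MP jw P by (simp add: mult_mat_vec[of _ n n])
  qed
qed

lemma zero_mat_vec[simp]: "z \<in> carrier_vec nc \<Longrightarrow> 0\<^sub>m nr nc *\<^sub>v z = 0\<^sub>v nr"
  by (intro eq_vecI) auto

lemma powv_add: "M \<in> carrier_mat n n \<Longrightarrow> z \<in> carrier_vec n \<Longrightarrow>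
  M ^\<^sub>m (a + b) *\<^sub>v z = M ^\<^sub>m a *\<^sub>v (M ^\<^sub>m b *\<^sub>v z)"
proof (induction b arbitrary: z)
  case 0 then show ?case by simp
next
  case (Suc b)
  have "M ^\<^sub>m (a + Suc b) *\<^sub>v z = M ^\<^sub>m (a + b) *\<^sub>v (M *\<^sub>v z)"
    using Suc.prems by (simp add: assoc_mult_mat_vec[of _ n n])
  also have "\<dots> = M ^\<^sub>m a *\<^sub>v (M ^\<^sub>m b *\<^sub>v (M *\<^sub>v z))" using Suc by simp
  also have "M ^\<^sub>m b *\<^sub>v (M *\<^sub>v z) = M ^\<^sub>m Suc b *\<^sub>v z"
    using Suc.prems by (simp add: assoc_mult_mat_vec[of _ n n])
  finally show ?case .
qed

lemma powv_comm: "M \<in> carrier_mat n n \<Longrightarrow> z \<in> carrier_vec n \<Longrightarrow>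
  M *\<^sub>v (M ^\<^sub>m k *\<^sub>v z) = M ^\<^sub>m k *\<^sub>v (M *\<^sub>v z)"
  using powv_add[of M n z 1 k] powv_add[of M n z k 1] by (simp add: add.commute)

lemma powv_pow: "M \<in> carrier_mat n n \<Longrightarrow> z \<in> carrier_vec n \<Longrightarrow>
  (M ^\<^sub>m h) ^\<^sub>m k *\<^sub>v z = M ^\<^sub>m (h * k) *\<^sub>v z"
proof (induction k arbitrary: z)
  case 0 then show ?case by simp
next
  case (Suc k)
  have "(M ^\<^sub>m h) ^\<^sub>m Suc k *\<^sub>v z = (M ^\<^sub>m h) ^\<^sub>m k *\<^sub>v (M ^\<^sub>m h *\<^sub>v z)"
    using Suc.prems by (simp, intro assoc_mult_mat_vec[of _ n n _ n]) auto
  also have "\<dots> = M ^\<^sub>m (h * k) *\<^sub>v (M ^\<^sub>m h *\<^sub>v z)"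
    using Suc.IH[of "M ^\<^sub>m h *\<^sub>v z"] Suc.prems by (meson mult_mat_vec_carrier pow_carrier_mat)
  also have "\<dots> = M ^\<^sub>m (h * Suc k) *\<^sub>v z" using powv_add[of M n z "h*k" h] Suc.prems
    by (simp add: add.commute)
  finally show ?case .
qed

lemma powv_eig: fixes M :: "'a::field mat"
  shows "M \<in> carrier_mat n n \<Longrightarrow> z \<in> carrier_vec n \<Longrightarrow> M *\<^sub>v z = c \<cdot>\<^sub>v z \<Longrightarrow>
  M ^\<^sub>m k *\<^sub>v z = c ^ k \<cdot>\<^sub>v z"
proof (induction k)
  case 0 then show ?case by simp
next
  case (Suc k)
  have "M ^\<^sub>m Suc k *\<^sub>v z = M ^\<^sub>m k *\<^sub>v (c \<cdot>\<^sub>v z)"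
    using Suc.prems by (simp add: assoc_mult_mat_vec[of _ n n])
  also have "\<dots> = c \<cdot>\<^sub>v (c ^ k \<cdot>\<^sub>v z)" using Suc by (simp add: mult_mat_vec[of _ n n])
  also have "\<dots> = c ^ Suc k \<cdot>\<^sub>v z" by (simp add: smult_smult_assoc mult.commute)
  finally show ?case .
qed

lemma smult_cancel: fixes z :: "'a::field vec"
  shows "z \<in> carrier_vec n \<Longrightarrow> z \<noteq> 0\<^sub>v n \<Longrightarrow> c \<cdot>\<^sub>v z = d \<cdot>\<^sub>v z \<Longrightarrow> c = d"
proof -
  assume z: "z \<in> carrier_vec n" "z \<noteq> 0\<^sub>v n" and e: "c \<cdot>\<^sub>v z = d \<cdot>\<^sub>v z"
  obtain i where i: "i < n" "z $ i \<noteq> 0" using z by (metis eq_vecI index_zero_vec carrier_vecD)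
  have "c * z $ i = d * z $ i" using arg_cong[OF e, of "\<lambda>v. v $ i"] i z by simp
  then show "c = d" using i by simp
qed

lemma smult_mat_vec: "A \<in> carrier_mat nr nc \<Longrightarrow> z \<in> carrier_vec nc \<Longrightarrow> (l \<cdot>\<^sub>m A) *\<^sub>v z = l \<cdot>\<^sub>v (A *\<^sub>v z)"
  by (intro eq_vecI) (auto simp: scalar_prod_def sum_distrib_left mult.assoc)

primrec Rm :: "'a::field mat \<Rightarrow> 'a \<Rightarrow> nat \<Rightarrow> 'a mat" where
  "Rm M l 0 = 0\<^sub>m (dim_row M) (dim_row M)"
| "Rm M l (Suc k) = l \<cdot>\<^sub>m Rm M l k + M ^\<^sub>m k"

primrec rr :: "'a::field \<Rightarrow> 'a \<Rightarrow> nat \<Rightarrow> 'a" where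
  "rr l c 0 = 0"
| "rr l c (Suc k) = l * rr l c k + c ^ k"

lemma Rm_carrier[simp]: "M \<in> carrier_mat n n \<Longrightarrow> Rm M l k \<in> carrier_mat n n"
  by (induction k) auto

lemma Rm_suc_vec: "M \<in> carrier_mat n n \<Longrightarrow> z \<in> carrier_vec n \<Longrightarrow>
  Rm M l (Suc k) *\<^sub>v z = l \<cdot>\<^sub>v (Rm M l k *\<^sub>v z) + M ^\<^sub>m k *\<^sub>v z"
  by (simp add: add_mult_distrib_mat_vec[of _ n n] smult_mat_vec[of _ n n])

lemma Rm_tel: fixes M :: "'a::field mat"
  shows "M \<in> carrier_mat n n \<Longrightarrow> z \<in> carrier_vec n \<Longrightarrow>
  Rm M l k *\<^sub>v (M *\<^sub>v z - l \<cdot>\<^sub>v z) = M ^\<^sub>m k *\<^sub>v z - l ^ k \<cdot>\<^sub>v z"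
proof (induction k)
  case 0 then show ?case by (intro eq_vecI) auto
next
  case (Suc k)
  let ?u = "M *\<^sub>v z - l \<cdot>\<^sub>v z"
  have u: "?u \<in> carrier_vec n" using Suc.prems by auto
  have "Rm M l (Suc k) *\<^sub>v ?u = l \<cdot>\<^sub>v (M ^\<^sub>m k *\<^sub>v z - l ^ k \<cdot>\<^sub>v z) + M ^\<^sub>m k *\<^sub>v ?u"
    using Rm_suc_vec[OF Suc.prems(1) u] Suc by simp
  also have "M ^\<^sub>m k *\<^sub>v ?u = M ^\<^sub>m Suc k *\<^sub>v z - l \<cdot>\<^sub>v (M ^\<^sub>m k *\<^sub>v z)"
    using Suc.prems
    by (simp add: mult_minus_distrib_mat_vec[of _ n n] mult_mat_vec[of _ n n] assoc_mult_mat_vec[of _ n n _ n])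
  finally show ?case using Suc.prems by (intro eq_vecI) (auto simp: algebra_simps)
qed

lemma Rm_comm: fixes M :: "'a::field mat"
  shows "M \<in> carrier_mat n n \<Longrightarrow> z \<in> carrier_vec n \<Longrightarrow>
  Rm M l k *\<^sub>v (M *\<^sub>v z) = M *\<^sub>v (Rm M l k *\<^sub>v z)"
proof (induction k)
  case 0 then show ?case by (intro eq_vecI) auto
next
  case (Suc k)
  have "Rm M l (Suc k) *\<^sub>v (M *\<^sub>v z) = l \<cdot>\<^sub>v (M *\<^sub>v (Rm M l k *\<^sub>v z)) + M *\<^sub>v (M ^\<^sub>m k *\<^sub>v z)"
    using Rm_suc_vec[OF Suc.prems(1), of "M *\<^sub>v z"] Suc powv_comm[of M n z k] by simp
  also have "\<dots> = M *\<^sub>v (Rm M l (Suc k) *\<^sub>v z)"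
  proof -
    have c1: "Rm M l k *\<^sub>v z \<in> carrier_vec n" "M ^\<^sub>m k *\<^sub>v z \<in> carrier_vec n"
      using Suc.prems by (meson Rm_carrier mult_mat_vec_carrier pow_carrier_mat)+
    have c2: "l \<cdot>\<^sub>v (Rm M l k *\<^sub>v z) \<in> carrier_vec n" using c1 by simp
    show ?thesis
      unfolding Rm_suc_vec[OF Suc.prems(1,2)] mult_add_distrib_mat_vec[OF Suc.prems(1) c2 c1(2)]
        mult_mat_vec[OF Suc.prems(1) c1(1)] ..
  qed
  finally show ?case .
qed

lemma Rm_eig: fixes M :: "'a::field mat"
  shows "M \<in> carrier_mat n n \<Longrightarrow> z \<in> carrier_vec n \<Longrightarrow> M *\<^sub>v z = c \<cdot>\<^sub>v z \<Longrightarrow>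
  Rm M l k *\<^sub>v z = rr l c k \<cdot>\<^sub>v z"
proof (induction k)
  case 0 then show ?case by (intro eq_vecI) auto
next
  case (Suc k)
  have "Rm M l (Suc k) *\<^sub>v z = l \<cdot>\<^sub>v (rr l c k \<cdot>\<^sub>v z) + c ^ k \<cdot>\<^sub>v z"
    using Rm_suc_vec[OF Suc.prems(1,2)] Suc powv_eig[of M n z c k] by simp
  then show ?case using Suc.prems by (intro eq_vecI) (auto simp: algebra_simps)
qed

lemma rr_same: "rr l l k = of_nat k * l ^ (k - 1)"
proof (induction k)
  case 0 then show ?case by simp
next
  case (Suc k) then show ?case by (cases k) (auto simp: algebra_simps)
qed

lemma pow_nz: fixes Ac :: "'a::field mat"
  assumes Ac: "Ac \<in> carrier_mat n n"
    and inj: "\<And>z. z \<in> carrier_vec n \<Longrightarrow> z \<noteq> 0\<^sub>v n \<Longrightarrow> Ac *\<^sub>v z \<noteq> 0\<^sub>v n"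
  shows "z \<in> carrier_vec n \<Longrightarrow> z \<noteq> 0\<^sub>v n \<Longrightarrow> Ac ^\<^sub>m k *\<^sub>v z \<noteq> 0\<^sub>v n"
proof (induction k arbitrary: z)
  case 0 then show ?case using Ac by simp
next
  case (Suc k)
  have "Ac ^\<^sub>m Suc k *\<^sub>v z = Ac ^\<^sub>m k *\<^sub>v (Ac *\<^sub>v z)"
    using Suc.prems Ac by (simp add: assoc_mult_mat_vec[of _ n n _ n])
  then show ?case using Suc.IH[of "Ac *\<^sub>v z"] inj[OF Suc.prems] Suc.prems Ac by auto
qed

lemma kernel_eig:
  fixes Ac :: "complex mat"
  assumes Ac: "Ac \<in> carrier_mat n n" and h: "h > 0"
    and inj: "\<And>z. z \<in> carrier_vec n \<Longrightarrow> z \<noteq> 0\<^sub>v n \<Longrightarrow> Ac *\<^sub>v z \<noteq> 0\<^sub>v n"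
    and np: "\<And>a b. eigenvalue Ac a \<Longrightarrow> eigenvalue Ac b \<Longrightarrow> a ^ h = b ^ h \<Longrightarrow> a = b"
    and v: "v \<in> carrier_vec n" "v \<noteq> 0\<^sub>v n" and Bv: "Ac ^\<^sub>m h *\<^sub>v v = \<mu> \<cdot>\<^sub>v v"
  shows "\<exists>lam. Ac *\<^sub>v v = lam \<cdot>\<^sub>v v"
proof -
  let ?B = "Ac ^\<^sub>m h"
  have B: "?B \<in> carrier_mat n n" using Ac by simp
  have mu: "\<mu> \<noteq> 0"
  proof
    assume "\<mu> = 0"
    then have "?B *\<^sub>v v = 0\<^sub>v n" using Bv v by (intro eq_vecI) auto
    then show False using pow_nz[OF Ac inj v] by simp
  qed
  define GW where "GW z \<longleftrightarrow> z \<in> carrier_vec n \<and> ?B *\<^sub>v z = \<mu> \<cdot>\<^sub>v z" for z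
  have GWstep: "GW (Ac *\<^sub>v w - \<nu> \<cdot>\<^sub>v w)" if "GW w" for w \<nu>
  proof -
    have w: "w \<in> carrier_vec n" and Bw: "?B *\<^sub>v w = \<mu> \<cdot>\<^sub>v w" using that unfolding GW_def by auto
    have "?B *\<^sub>v (Ac *\<^sub>v w) = Ac *\<^sub>v (?B *\<^sub>v w)" using powv_comm[OF Ac w] by simp
    also have "\<dots> = \<mu> \<cdot>\<^sub>v (Ac *\<^sub>v w)" using Bw mult_mat_vec[OF Ac w] by simp
    finally have 1: "?B *\<^sub>v (Ac *\<^sub>v w) = \<mu> \<cdot>\<^sub>v (Ac *\<^sub>v w)" .
    have "?B *\<^sub>v (Ac *\<^sub>v w - \<nu> \<cdot>\<^sub>v w) = ?B *\<^sub>v (Ac *\<^sub>v w) - \<nu> \<cdot>\<^sub>v (?B *\<^sub>v w)"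
      using B w Ac by (simp add: mult_minus_distrib_mat_vec[OF B] mult_mat_vec[OF B])
    also have "\<dots> = \<mu> \<cdot>\<^sub>v (Ac *\<^sub>v w - \<nu> \<cdot>\<^sub>v w)" unfolding 1 Bw using w Ac
      by (intro eq_vecI) (auto simp: algebra_simps)
    finally show ?thesis using w Ac unfolding GW_def by auto
  qed
  have GWv: "GW v" unfolding GW_def using v Bv by auto
  obtain j w1 lam where w1: "GW w1" "w1 \<in> carrier_vec n" "w1 \<noteq> 0\<^sub>v n" "Ac *\<^sub>v w1 = lam \<cdot>\<^sub>v w1"
    using inv_eig[OF Ac, of "\<lambda>j z. GW z", OF GWstep GWv v] by blast
  have evl: "eigenvalue Ac lam" unfolding eigenvalue_def eigenvector_def using w1 Ac by auto
  have "lam ^ h \<cdot>\<^sub>v w1 = \<mu> \<cdot>\<^sub>v w1" using powv_eig[OF Ac w1(2) w1(4), of h] w1(1) unfolding GW_def by simp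
  then have lh: "lam ^ h = \<mu>" using smult_cancel[OF w1(2,3)] by blast
  define u where "u = Ac *\<^sub>v v - lam \<cdot>\<^sub>v v"
  have uc: "u \<in> carrier_vec n" unfolding u_def using Ac v by auto
  have "u = 0\<^sub>v n"
  proof (rule ccontr)
    assume unz: "u \<noteq> 0\<^sub>v n"
    let ?R = "Rm Ac lam h"
    have R: "?R \<in> carrier_mat n n" using Ac by simp
    have Ru: "?R *\<^sub>v u = 0\<^sub>v n" unfolding u_def Rm_tel[OF Ac v(1)] Bv lh using v by simp
    define G2 where "G2 z \<longleftrightarrow> GW z \<and> ?R *\<^sub>v z = 0\<^sub>v n" for z
    have G2step: "G2 (Ac *\<^sub>v w - \<nu> \<cdot>\<^sub>v w)" if "G2 w" for w \<nu>
    proof -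
      have w: "w \<in> carrier_vec n" and Rw: "?R *\<^sub>v w = 0\<^sub>v n" and g: "GW w"
        using that unfolding G2_def GW_def by auto
      have "?R *\<^sub>v (Ac *\<^sub>v w - \<nu> \<cdot>\<^sub>v w) = ?R *\<^sub>v (Ac *\<^sub>v w) - \<nu> \<cdot>\<^sub>v (?R *\<^sub>v w)"
        using R w Ac by (simp add: mult_minus_distrib_mat_vec[OF R] mult_mat_vec[OF R])
      also have "\<dots> = 0\<^sub>v n" unfolding Rm_comm[OF Ac w] Rw using Ac by (intro eq_vecI) auto
      finally show ?thesis using GWstep[OF g] unfolding G2_def by auto
    qed
    have G2u: "G2 u" unfolding G2_def u_def using GWstep[OF GWv] Ru unfolding u_def by auto
    obtain j w2 \<nu> where w2: "G2 w2" "w2 \<in> carrier_vec n" "w2 \<noteq> 0\<^sub>v n" "Ac *\<^sub>v w2 = \<nu> \<cdot>\<^sub>v w2"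
      using inv_eig[OF Ac, of "\<lambda>j z. G2 z", OF G2step G2u uc unz] by blast
    have evn: "eigenvalue Ac \<nu>" unfolding eigenvalue_def eigenvector_def using w2 Ac by auto
    have "\<nu> ^ h \<cdot>\<^sub>v w2 = \<mu> \<cdot>\<^sub>v w2" using powv_eig[OF Ac w2(2) w2(4), of h] w2(1)
      unfolding G2_def GW_def by simp
    then have "\<nu> ^ h = lam ^ h" using smult_cancel[OF w2(2,3)] lh by blast
    then have nl: "\<nu> = lam" using np[OF evn evl] by blast
    have e1: "rr lam \<nu> h \<cdot>\<^sub>v w2 = 0\<^sub>v n" using Rm_eig[OF Ac w2(2) w2(4), of lam h] w2(1)
      unfolding G2_def by simp
    have "rr lam \<nu> h \<cdot>\<^sub>v w2 = 0 \<cdot>\<^sub>v w2" unfolding e1 using w2(2) by (intro eq_vecI) auto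
    then have "rr lam \<nu> h = 0" using smult_cancel[OF w2(2,3)] by blast
    then have "of_nat h * lam ^ (h - 1) = 0" unfolding nl rr_same .
    moreover have "lam \<noteq> 0" using lh mu h by auto
    ultimately show False using h by simp
  qed
  then have "Ac *\<^sub>v v = lam \<cdot>\<^sub>v v"
  proof (intro eq_vecI)
    fix i assume u0: "u = 0\<^sub>v n" and i: "i < dim_vec (lam \<cdot>\<^sub>v v)"
    then have "u $ i = 0" using v by simp
    then show "(Ac *\<^sub>v v) $ i = (lam \<cdot>\<^sub>v v) $ i" unfolding u_def using i Ac v by simp
  qed (use Ac v in simp)
  then show ?thesis by blast
qed

lemma obs_entry:
  fixes A C :: "real mat"
  assumes A: "A \<in> carrier_mat n n" and C: "C \<in> carrier_mat 1 n"
    and x: "x \<in> carrier_vec n" and i: "i < length ts"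
  shows "(map_mat complex_of_real (sample_obs_matrix A C ts) *\<^sub>v x) $ i
    = (map_mat complex_of_real C *\<^sub>v (map_mat complex_of_real A ^\<^sub>m (ts ! i) *\<^sub>v x)) $ 0"
proof -
  let ?Ac = "map_mat complex_of_real A" and ?Cc = "map_mat complex_of_real C"
  let ?t = "ts ! i"
  have Oc: "sample_obs_matrix A C ts \<in> carrier_mat (length ts) n"
    unfolding sample_obs_matrix_def using A by auto
  have hm: "map_mat complex_of_real (C * A ^\<^sub>m ?t) = ?Cc * ?Ac ^\<^sub>m ?t"
    using of_real_hom.mat_hom_mult[of C 1 n "A ^\<^sub>m ?t" n] of_real_hom.mat_hom_pow[OF A, of ?t] A C
    by (metis pow_carrier_mat)
  have ent: "sample_obs_matrix A C ts $$ (i, j) = (C * A ^\<^sub>m ?t) $$ (0, j)" if j: "j < n" for j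
    unfolding sample_obs_matrix_def using A C i j by (simp add: mat_of_rows_index)
  have "(map_mat complex_of_real (sample_obs_matrix A C ts) *\<^sub>v x) $ i
     = (\<Sum>j = 0..<n. complex_of_real (sample_obs_matrix A C ts $$ (i, j)) * x $ j)"
    using Oc i x by (simp add: scalar_prod_def)
  also have "\<dots> = (\<Sum>j = 0..<n. (?Cc * ?Ac ^\<^sub>m ?t) $$ (0, j) * x $ j)"
  proof (rule sum.cong[OF refl])
    fix j assume j: "j \<in> {0..<n}"
    have "(?Cc * ?Ac ^\<^sub>m ?t) $$ (0, j) = complex_of_real ((C * A ^\<^sub>m ?t) $$ (0, j))"
      unfolding hm[symmetric] using j A C by simp
    then show "complex_of_real (sample_obs_matrix A C ts $$ (i, j)) * x $ j = (?Cc * ?Ac ^\<^sub>m ?t) $$ (0, j) * x $ j"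
      using ent j by simp
  qed
  also have "\<dots> = ((?Cc * ?Ac ^\<^sub>m ?t) *\<^sub>v x) $ 0"
    using A C x by (simp add: scalar_prod_def)
  also have "\<dots> = (?Cc *\<^sub>v (?Ac ^\<^sub>m ?t *\<^sub>v x)) $ 0"
    using A C x by (simp add: assoc_mult_mat_vec[of _ 1 n _ n])
  finally show ?thesis .
qed

theorem theorem2:
  fixes A C :: "real mat" and n t1 tbar :: nat
  assumes "n \<ge> 1"
    and "A \<in> carrier_mat n n"
    and "C \<in> carrier_mat 1 n"
    and "observable A C"
    and "\<forall>z. ceigenvalue A z \<longrightarrow> z \<noteq> 0"
    and "tbar > 0"
    and "\<not> pathological_period A tbar"
  shows "vec_space.rank n (sample_obs_matrix A C (map (\<lambda>k. t1 + k * tbar) [0..<n])) = n"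
proof -
  note A = assms(2) and C = assms(3)
  define ts where "ts = map (\<lambda>k. t1 + k * tbar) [0..<n]"
  define Ac where "Ac = map_mat complex_of_real A"
  define Cc where "Cc = map_mat complex_of_real C"
  define Lf where "Lf y = (Cc *\<^sub>v y) $ 0" for y
  have Acc: "Ac \<in> carrier_mat n n" unfolding Ac_def using A by simp
  have Ccc: "Cc \<in> carrier_mat 1 n" unfolding Cc_def using C by simp
  have dA: "dim_col A = n" using A by simp
  have Lf_lin: "Lf (a - c \<cdot>\<^sub>v b) = Lf a - c * Lf b" if "a \<in> carrier_vec n" "b \<in> carrier_vec n" for a b c
    unfolding Lf_def using that Ccc
    by (simp add: mult_minus_distrib_mat_vec[OF Ccc] mult_mat_vec[OF Ccc])
  have Lf_smult: "Lf (c \<cdot>\<^sub>v b) = c * Lf b" if "b \<in> carrier_vec n" for b c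
    unfolding Lf_def using that Ccc by (simp add: mult_mat_vec[OF Ccc])
  have ev: "eigenvalue Ac z \<longleftrightarrow> ceigenvalue A z" for z unfolding ceigenvalue_def Ac_def ..
  have inj: "Ac *\<^sub>v z \<noteq> 0\<^sub>v n" if z: "z \<in> carrier_vec n" "z \<noteq> 0\<^sub>v n" for z
  proof
    assume "Ac *\<^sub>v z = 0\<^sub>v n"
    then have "Ac *\<^sub>v z = 0 \<cdot>\<^sub>v z" using z by (intro eq_vecI) auto
    then have "eigenvalue Ac 0" unfolding eigenvalue_def eigenvector_def using z Acc by auto
    then show False using assms(5) ev by blast
  qed
  have np: "a = b" if "eigenvalue Ac a" "eigenvalue Ac b" "a ^ tbar = b ^ tbar" for a b
    using assms(6,7) that ev unfolding pathological_period_def by blast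
  let ?O = "sample_obs_matrix A C [0..<n]"
  have Oc: "?O \<in> carrier_mat n n" unfolding sample_obs_matrix_def using A by auto
  have detO: "det ?O \<noteq> 0"
    using vec_space.det_rank_iff[OF Oc] assms(4) unfolding observable_def dA by simp
  let ?O' = "sample_obs_matrix A C ts"
  have O'c: "?O' \<in> carrier_mat n n" unfolding sample_obs_matrix_def ts_def using A by auto
  have "det ?O' \<noteq> 0"
  proof
    assume d0: "det ?O' = 0"
    have "det (map_mat complex_of_real ?O') = 0" using d0 by simp
    then obtain x where x: "x \<in> carrier_vec n" "x \<noteq> 0\<^sub>v n" "map_mat complex_of_real ?O' *\<^sub>v x = 0\<^sub>v n"
      using det_0_iff_vec_prod_zero[of "map_mat complex_of_real ?O'" n] O'c by auto
    have Lx: "Lf (Ac ^\<^sub>m (t1 + k * tbar) *\<^sub>v x) = 0" if k: "k < n" for k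
    proof -
      have "(map_mat complex_of_real ?O' *\<^sub>v x) $ k = 0" using x k by simp
      moreover have "ts ! k = t1 + k * tbar" unfolding ts_def using k by simp
      ultimately show ?thesis using obs_entry[OF A C x(1), of k ts] k
        unfolding Lf_def Ac_def Cc_def ts_def by simp
    qed
    define B where "B = Ac ^\<^sub>m tbar"
    have Bc: "B \<in> carrier_mat n n" unfolding B_def using Acc by simp
    define y where "y = Ac ^\<^sub>m t1 *\<^sub>v x"
    have yc: "y \<in> carrier_vec n" unfolding y_def using Acc x by (meson mult_mat_vec_carrier pow_carrier_mat)
    have ynz: "y \<noteq> 0\<^sub>v n" unfolding y_def using pow_nz[OF Acc inj x(1,2)] by simp
    define G where "G j z \<longleftrightarrow> z \<in> carrier_vec n \<and> (\<forall>k. k + j < n \<longrightarrow> Lf (B ^\<^sub>m k *\<^sub>v z) = 0)" for j z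
    have G0: "G 0 y" unfolding G_def
    proof (intro conjI allI impI yc)
      fix k assume "k + 0 < n"
      then have k: "k < n" by simp
      have "B ^\<^sub>m k *\<^sub>v y = Ac ^\<^sub>m (tbar * k) *\<^sub>v (Ac ^\<^sub>m t1 *\<^sub>v x)"
        unfolding B_def y_def by (rule powv_pow[OF Acc yc[unfolded y_def]])
      also have "\<dots> = Ac ^\<^sub>m (t1 + k * tbar) *\<^sub>v x"
        using powv_add[OF Acc x(1), of "tbar * k" t1] by (simp add: ac_simps)
      finally show "Lf (B ^\<^sub>m k *\<^sub>v y) = 0" using Lx[OF k] by simp
    qed
    have Gstep: "G (Suc j) (B *\<^sub>v w - \<mu> \<cdot>\<^sub>v w)" if "G j w" "w \<in> carrier_vec n" for j w \<mu>
      unfolding G_def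
    proof (intro conjI allI impI)
      show "B *\<^sub>v w - \<mu> \<cdot>\<^sub>v w \<in> carrier_vec n" using Bc that by auto
      fix k assume k: "k + Suc j < n"
      have "B ^\<^sub>m k *\<^sub>v (B *\<^sub>v w - \<mu> \<cdot>\<^sub>v w) = B ^\<^sub>m k *\<^sub>v (B *\<^sub>v w) - \<mu> \<cdot>\<^sub>v (B ^\<^sub>m k *\<^sub>v w)"
        using Bc that by (simp add: mult_minus_distrib_mat_vec[of _ n n] mult_mat_vec[of _ n n])
      also have "B ^\<^sub>m k *\<^sub>v (B *\<^sub>v w) = B ^\<^sub>m (Suc k) *\<^sub>v w"
        using Bc that by (simp add: assoc_mult_mat_vec[of _ n n _ n])
      finally have "Lf (B ^\<^sub>m k *\<^sub>v (B *\<^sub>v w - \<mu> \<cdot>\<^sub>v w)) = Lf (B ^\<^sub>m (Suc k) *\<^sub>v w) - \<mu> * Lf (B ^\<^sub>m k *\<^sub>v w)"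
        using Lf_lin[of "B ^\<^sub>m (Suc k) *\<^sub>v w" "B ^\<^sub>m k *\<^sub>v w" \<mu>] Bc that
        by (metis mult_mat_vec_carrier pow_carrier_mat)
      also have "\<dots> = 0"
      proof -
        have "Suc k + j < n" "k + j < n" using k by simp_all
        then have "Lf (B ^\<^sub>m (Suc k) *\<^sub>v w) = 0" "Lf (B ^\<^sub>m k *\<^sub>v w) = 0"
          using that(1) unfolding G_def by blast+
        then show ?thesis by simp
      qed
      finally show "Lf (B ^\<^sub>m k *\<^sub>v (B *\<^sub>v w - \<mu> \<cdot>\<^sub>v w)) = 0" .
    qed
    obtain j v \<mu> where v: "j < n" "G j v" "v \<in> carrier_vec n" "v \<noteq> 0\<^sub>v n" "B *\<^sub>v v = \<mu> \<cdot>\<^sub>v v"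
      using inv_eig[OF Bc, of G, OF Gstep G0 yc ynz] by blast
    have "Lf (B ^\<^sub>m 0 *\<^sub>v v) = 0" using v(1,2) unfolding G_def by (metis add_0)
    then have Lv: "Lf v = 0" using Bc v(3) by simp
    obtain lam where lam: "Ac *\<^sub>v v = lam \<cdot>\<^sub>v v"
      using kernel_eig[OF Acc assms(6) inj np v(3,4)] v(5) unfolding B_def by blast
    have "map_mat complex_of_real ?O *\<^sub>v v = 0\<^sub>v n"
    proof (rule eq_vecI)
      fix i assume "i < dim_vec (0\<^sub>v n :: complex vec)"
      then have i: "i < n" by simp
      have "(map_mat complex_of_real ?O *\<^sub>v v) $ i = Lf (Ac ^\<^sub>m i *\<^sub>v v)"
        using obs_entry[OF A C v(3), of i "[0..<n]"] i unfolding Lf_def Ac_def Cc_def by simp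
      also have "\<dots> = 0" using powv_eig[OF Acc v(3) lam, of i] Lf_smult v(3) Lv by simp
      finally show "(map_mat complex_of_real ?O *\<^sub>v v) $ i = 0\<^sub>v n $ i" using i by simp
    qed (use Oc in simp)
    then have "det (map_mat complex_of_real ?O) = 0"
      using det_0_iff_vec_prod_zero[of "map_mat complex_of_real ?O" n] Oc v(3,4) by auto
    then show False using detO by simp
  qed
  then show ?thesis using vec_space.det_rank_iff[OF O'c] unfolding ts_def by simp
qed

end
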